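(* Let $X$ be an infinite-dimensional real Banach space and let $A \subset X$ be a convex subset with $0 \in A$. Assume there is a finite subset $O \subset X$ such that $B_X \subset A + O$. Then for every $\varepsilon > 0$ there exist a finite-codimensional subspace $Y \subset X$ and a finite subset $H \subset A$ such that $$B_Y \subset (A - H) + \varepsilon B_X.$$
   Context: $B_X$ is the closed unit ball of $X$ and $B_Y = B_X \cap Y$. Sums and differences of sets are Minkowski sums: $A + O = \{a+o : a\in A, o \in O\}$, $A - H = \{a - h : a \in A, h \in H\}$. *)

theory Defs
  imports "HOL-Analysis.Analysis"
begin

definition finite_codim :: "'a::real_vector set \<Rightarrow> bool" where
  "finite_codim Y \<longleftrightarrow> (\<exists>F. finite F \<and> span (Y \<union> F) = UNIV)"

definition infinite_dimensional :: "'a::real_vector itself \<Rightarrow> bool" where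
  "infinite_dimensional _ \<longleftrightarrow> \<not> (\<exists>S::'a set. finite S \<and> span S = UNIV)"

end

theory Submission
  imports Defs "HOL-Analysis.Analysis"
begin
lemma hahn_banach_sublinear:
  fixes p :: "'a::real_vector \<Rightarrow> real"
  assumes sub: "\<And>x y. p (x + y) \<le> p x + p y"
    and hom: "\<And>s x. s > 0 \<Longrightarrow> p (s *\<^sub>R x) \<le> s * p x"
  shows "\<exists>F. linear F \<and> (\<forall>x. F x \<le> p x)"
proof -
  have homeq: "p (s *\<^sub>R x) = s * p x" if "s > 0" for s x
  proof -
    have "p x = p ((1/s) *\<^sub>R (s *\<^sub>R x))" using that by simp
    also have "\<dots> \<le> (1/s) * p (s *\<^sub>R x)" using hom[of "1/s" "s *\<^sub>R x"] that by simp
    finally have "s * p x \<le> p (s *\<^sub>R x)" using that by (simp add: field_simps)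
    with hom[OF that, of x] show ?thesis by linarith
  qed
  have p0: "0 \<le> p 0" using hom[of 2 0] by simp
  define Good where "Good = {G :: ('a \<times> real) set. subspace G \<and>
      (\<forall>x a b. (x,a) \<in> G \<longrightarrow> (x,b) \<in> G \<longrightarrow> a = b) \<and> (\<forall>x a. (x,a) \<in> G \<longrightarrow> a \<le> p x)}"
  have G0: "{0} \<in> Good" unfolding Good_def using p0 subspace_single_0[where 'a="'a \<times> real"] by (auto simp: zero_prod_def)
  have chain: "\<Union>\<C> \<in> Good" if Cne: "\<C> \<noteq> {}" and Cch: "subset.chain Good \<C>" for \<C>
  proof -
    have CG: "\<And>G. G \<in> \<C> \<Longrightarrow> G \<in> Good" and ch: "\<And>G1 G2. G1 \<in> \<C> \<Longrightarrow> G2 \<in> \<C> \<Longrightarrow> G1 \<subseteq> G2 \<or> G2 \<subseteq> G1"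
      using Cch unfolding subset.chain_def by auto
    have sp: "subspace (\<Union>\<C>)"
      unfolding subspace_def
    proof (intro conjI ballI allI)
      obtain G where "G \<in> \<C>" using Cne by blast
      then show "0 \<in> \<Union>\<C>" using CG[of G] subspace_0[of G] unfolding Good_def by blast
    next
      fix x y assume "x \<in> \<Union>\<C>" "y \<in> \<Union>\<C>"
      then obtain G1 G2 where g: "G1 \<in> \<C>" "G2 \<in> \<C>" "x \<in> G1" "y \<in> G2" by blast
      show "x + y \<in> \<Union>\<C>"
      proof (cases "G1 \<subseteq> G2")
        case True then show ?thesis using g CG[of G2] unfolding Good_def by (auto intro: subspace_add)
      next
        case False then have "G2 \<subseteq> G1" using ch g by blast
        then show ?thesis using g CG[of G1] unfolding Good_def by (auto intro: subspace_add)
      qed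
    next
      fix c x assume "x \<in> \<Union>\<C>"
      then obtain G where g: "G \<in> \<C>" "x \<in> G" by blast
      then show "c *\<^sub>R x \<in> \<Union>\<C>" using CG[of G] unfolding Good_def by (auto intro: subspace_scale)
    qed
    have fn: "a = b" if H: "(x,a) \<in> \<Union>\<C>" "(x,b) \<in> \<Union>\<C>" for x a b
    proof -
      obtain G1 G2 where g: "G1 \<in> \<C>" "G2 \<in> \<C>" "(x,a) \<in> G1" "(x,b) \<in> G2" using H by blast
      show ?thesis
      proof (cases "G1 \<subseteq> G2")
        case True then show ?thesis using g CG[of G2] unfolding Good_def by blast
      next
        case False then have "G2 \<subseteq> G1" using ch g by blast
        then show ?thesis using g CG[of G1] unfolding Good_def by blast
      qed
    qed
    have le: "a \<le> p x" if "(x,a) \<in> \<Union>\<C>" for x a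
      using that CG unfolding Good_def by blast
    show ?thesis unfolding Good_def using sp fn le by blast
  qed
  obtain M where MG: "M \<in> Good" and Mmax: "\<And>X. X \<in> Good \<Longrightarrow> M \<subseteq> X \<Longrightarrow> X = M"
    using subset_Zorn_nonempty[of Good] G0 chain by blast
  have Msub: "subspace M" and Mfn: "\<And>x a b. (x,a) \<in> M \<Longrightarrow> (x,b) \<in> M \<Longrightarrow> a = b"
    and Mle: "\<And>x a. (x,a) \<in> M \<Longrightarrow> a \<le> p x"
    using MG unfolding Good_def by blast+
  have Madd: "(x + y, a + b) \<in> M" if "(x,a) \<in> M" "(y,b) \<in> M" for x y a b
    using subspace_add[OF Msub that] by simp
  have Mscale: "(r *\<^sub>R x, r * a) \<in> M" if "(x,a) \<in> M" for r x a
    using subspace_scale[OF Msub that, of r] by simp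
  have M0: "(0,0) \<in> M" using subspace_0[OF Msub] by (simp add: zero_prod_def)
  have total: "\<exists>a. (x1,a) \<in> M" for x1
  proof (rule ccontr)
    assume nx: "\<not> (\<exists>a. (x1,a) \<in> M)"
    define D where "D = {a - p (y - x1) | y a. (y,a) \<in> M}"
    define c where "c = Sup D"
    have Dne: "D \<noteq> {}" unfolding D_def using M0 by blast
    have Dub: "d \<le> p (y' + x1) - a'" if "d \<in> D" "(y',a') \<in> M" for d y' a'
    proof -
      obtain y a where ya: "(y,a) \<in> M" "d = a - p (y - x1)" using \<open>d \<in> D\<close> unfolding D_def by blast
      have "a + a' \<le> p (y + y')" using Mle[OF Madd[OF ya(1) that(2)]] .
      also have "\<dots> \<le> p (y - x1) + p (y' + x1)" using sub[of "y - x1" "y' + x1"] by simp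
      finally show ?thesis using ya by simp
    qed
    have bdd: "bdd_above D" using Dub M0 unfolding bdd_above_def by blast
    have c1: "a - p (y - x1) \<le> c" if "(y,a) \<in> M" for y a
      unfolding c_def by (rule cSup_upper[OF _ bdd]) (use that D_def in blast)
    have c2: "c \<le> p (y' + x1) - a'" if "(y',a') \<in> M" for y' a'
      unfolding c_def by (rule cSup_least[OF Dne]) (use Dub that in blast)
    define M' where "M' = {(y + t *\<^sub>R x1, a + t * c) | y a t. (y,a) \<in> M}"
    have "M' \<in> Good"
    proof -
      have sp: "subspace M'"
        unfolding subspace_def
      proof (intro conjI ballI allI)
        show "0 \<in> M'" unfolding M'_def using M0 by (force simp: zero_prod_def)
      next
        fix u v assume "u \<in> M'" "v \<in> M'"
        then obtain y a t y' a' t' where u: "u = (y + t *\<^sub>R x1, a + t * c)" "(y,a) \<in> M"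
          and v: "v = (y' + t' *\<^sub>R x1, a' + t' * c)" "(y',a') \<in> M" unfolding M'_def by blast
        have "u + v = ((y + y') + (t + t') *\<^sub>R x1, (a + a') + (t + t') * c)"
          using u v by (simp add: algebra_simps scaleR_add_left)
        then show "u + v \<in> M'" unfolding M'_def using Madd[OF u(2) v(2)] by blast
      next
        fix r u assume "u \<in> M'"
        then obtain y a t where u: "u = (y + t *\<^sub>R x1, a + t * c)" "(y,a) \<in> M" unfolding M'_def by blast
        have "r *\<^sub>R u = (r *\<^sub>R y + (r * t) *\<^sub>R x1, r * a + (r * t) * c)"
          using u by (simp add: algebra_simps)
        then show "r *\<^sub>R u \<in> M'" unfolding M'_def using Mscale[OF u(2)] by blast
      qed
      have fn: "b1 = b2" if H: "(x,b1) \<in> M'" "(x,b2) \<in> M'" for x b1 b2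
      proof -
        obtain y a t y' a' t' where u: "x = y + t *\<^sub>R x1" "b1 = a + t * c" "(y,a) \<in> M"
          and v: "x = y' + t' *\<^sub>R x1" "b2 = a' + t' * c" "(y',a') \<in> M"
          using H unfolding M'_def by blast
        have tt: "t = t'"
        proof (rule ccontr)
          assume "t \<noteq> t'"
          have "(y' - y, a' - a) \<in> M" using Madd[OF v(3) Mscale[OF u(3), of "-1"]] by simp
          then have "((1/(t - t')) *\<^sub>R (y' - y), (1/(t-t')) * (a' - a)) \<in> M" by (rule Mscale)
          moreover have "(1/(t - t')) *\<^sub>R (y' - y) = x1"
          proof -
            have "y' - y = (t - t') *\<^sub>R x1" using u(1) v(1) by (simp add: algebra_simps)
            then show ?thesis using \<open>t \<noteq> t'\<close> by simp
          qed
          ultimately show False using nx by auto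
        qed
        then have "y = y'" using u(1) v(1) by simp
        then have "a = a'" using Mfn u(3) v(3) by blast
        then show ?thesis using u v tt by simp
      qed
      have le: "b \<le> p x" if H: "(x,b) \<in> M'" for x b
      proof -
        obtain y a t where u: "x = y + t *\<^sub>R x1" "b = a + t * c" "(y,a) \<in> M"
          using H unfolding M'_def by blast
        consider "t > 0" | "t = 0" | "t < 0" by linarith
        then show ?thesis
        proof cases
          case 1
          have "c \<le> p ((1/t) *\<^sub>R y + x1) - (1/t) * a" using c2[OF Mscale[OF u(3), of "1/t"]] .
          then have "t * c \<le> t * p ((1/t) *\<^sub>R y + x1) - a" using 1 by (simp add: field_simps)
          also have "t * p ((1/t) *\<^sub>R y + x1) = p (t *\<^sub>R ((1/t) *\<^sub>R y + x1))" using homeq[OF 1] by simp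
          also have "t *\<^sub>R ((1/t) *\<^sub>R y + x1) = x" using 1 u(1) by (simp add: scaleR_add_right)
          finally show ?thesis using u by simp
        next
          case 2 then show ?thesis using u Mle by simp
        next
          case 3
          define s where "s = - t"
          have s: "s > 0" using 3 s_def by simp
          have "(1/s) * a - p ((1/s) *\<^sub>R y - x1) \<le> c" using c1[OF Mscale[OF u(3), of "1/s"]] .
          then have "a - s * c \<le> s * p ((1/s) *\<^sub>R y - x1)" using s by (simp add: field_simps)
          also have "s * p ((1/s) *\<^sub>R y - x1) = p (s *\<^sub>R ((1/s) *\<^sub>R y - x1))" using homeq[OF s] by simp
          also have "s *\<^sub>R ((1/s) *\<^sub>R y - x1) = x" using s u(1) s_def by (simp add: scaleR_diff_right)
          finally show ?thesis using u s_def by simp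
        qed
      qed
      show ?thesis unfolding Good_def using sp fn le by blast
    qed
    moreover have "M \<subseteq> M'"
    proof
      fix u assume "u \<in> M"
      then obtain y a where "u = (y,a)" "(y,a) \<in> M" by (cases u) auto
      then show "u \<in> M'" unfolding M'_def by force
    qed
    moreover have "(x1, c) \<in> M'" unfolding M'_def using M0 by force
    ultimately show False using Mmax nx by blast
  qed
  define F where "F x = (THE a. (x,a) \<in> M)" for x
  have FM: "(x, F x) \<in> M" for x
    unfolding F_def using total[of x] Mfn by (metis theI)
  have Fu: "F x = a" if "(x,a) \<in> M" for x a using FM[of x] that Mfn by blast
  have "linear F"
  proof (rule linearI)
    fix x y show "F (x + y) = F x + F y" using Fu[OF Madd[OF FM FM]] .
  next
    fix r x show "F (r *\<^sub>R x) = r *\<^sub>R F x" using Fu[OF Mscale[OF FM]] by simp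
  qed
  moreover have "\<forall>x. F x \<le> p x" using FM Mle by blast
  ultimately show ?thesis by blast
qed


lemma convex_separation_ball:
  fixes C :: "'a::real_normed_vector set"
  assumes cvx: "convex C" and ne: "C \<noteq> {}" and ep: "\<epsilon> > 0"
    and far: "\<And>c. c \<in> C \<Longrightarrow> \<epsilon> \<le> norm c"
  shows "\<exists>F. bounded_linear F \<and> (\<forall>c\<in>C. (F c :: real) > 0)"
proof -
  define S where "S x = {norm (x + t *\<^sub>R c) - t * \<epsilon> | t c. t \<ge> 0 \<and> c \<in> C}" for x
  define p where "p x = Inf (S x)" for x
  obtain c0 where c0: "c0 \<in> C" using ne by blast
  have Sne: "S x \<noteq> {}" for x unfolding S_def using c0 by force
  have Slow: "- norm x \<le> v" if vS: "v \<in> S x" for x v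
  proof -
    obtain t c where tc: "v = norm (x + t *\<^sub>R c) - t * \<epsilon>" "t \<ge> 0" "c \<in> C"
      using vS unfolding S_def by blast
    have "t * \<epsilon> \<le> t * norm c" using far[OF tc(3)] tc(2) by (simp add: mult_left_mono)
    also have "\<dots> = norm (t *\<^sub>R c)" using tc(2) by simp
    also have "\<dots> \<le> norm (x + t *\<^sub>R c) + norm x" by (metis add.commute add_diff_cancel_left' norm_triangle_ineq4 add.commute)
    finally show ?thesis using tc(1) by simp
  qed
  have bdd: "bdd_below (S x)" for x using Slow unfolding bdd_below_def by blast
  have pS: "p x \<le> v" if "v \<in> S x" for x v unfolding p_def using cInf_lower[OF that bdd] .
  have Sp: "w \<le> p x" if "\<And>v. v \<in> S x \<Longrightarrow> w \<le> v" for w x unfolding p_def using cInf_greatest[OF Sne that] .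
  have pnorm: "p x \<le> norm x" for x using pS[of "norm x" x] c0 unfolding S_def by force
  have pc: "p (- c) \<le> - \<epsilon>" if "c \<in> C" for c using pS[of "- \<epsilon>" "-c"] that unfolding S_def
    by (metis (mono_tags, lifting) add.left_inverse diff_0 mem_Collect_eq mult_1 norm_zero scaleR_one zero_le_one)
  have sub: "p (x + y) \<le> p x + p y" for x y
  proof -
    have key: "p (x + y) \<le> u + v" if u: "u \<in> S x" and v: "v \<in> S y" for u v
    proof -
      obtain t1 c1 where 1: "u = norm (x + t1 *\<^sub>R c1) - t1 * \<epsilon>" "t1 \<ge> 0" "c1 \<in> C"
        using u unfolding S_def by blast
      obtain t2 c2 where 2: "v = norm (y + t2 *\<^sub>R c2) - t2 * \<epsilon>" "t2 \<ge> 0" "c2 \<in> C"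
        using v unfolding S_def by blast
      obtain c where c: "c \<in> C" "(t1 + t2) *\<^sub>R c = t1 *\<^sub>R c1 + t2 *\<^sub>R c2"
      proof (cases "t1 + t2 = 0")
        case True then have "t1 = 0" "t2 = 0" using 1 2 by auto
        then show ?thesis using that[of c1] 1 by simp
      next
        case False
        then have pos: "t1 + t2 > 0" using 1 2 by auto
        define c where "c = (t1/(t1+t2)) *\<^sub>R c1 + (t2/(t1+t2)) *\<^sub>R c2"
        have "c \<in> C" unfolding c_def
          using convexD[OF cvx 1(3) 2(3), of "t1/(t1+t2)" "t2/(t1+t2)"] 1 2 pos
          by (simp add: add_divide_distrib[symmetric])
        moreover have "(t1 + t2) *\<^sub>R c = t1 *\<^sub>R c1 + t2 *\<^sub>R c2"
          unfolding c_def using pos by (simp add: scaleR_add_right)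
        ultimately show ?thesis using that by blast
      qed
      have tpos: "0 \<le> t1 + t2" using 1 2 by simp
      have "norm (x + y + (t1 + t2) *\<^sub>R c) - (t1 + t2) * \<epsilon> \<in> S (x + y)"
        unfolding S_def using c(1) tpos by blast
      then have "p (x + y) \<le> norm (x + y + (t1 + t2) *\<^sub>R c) - (t1 + t2) * \<epsilon>" by (rule pS)
      also have "x + y + (t1 + t2) *\<^sub>R c = (x + t1 *\<^sub>R c1) + (y + t2 *\<^sub>R c2)" using c(2) by simp
      also have "norm \<dots> \<le> norm (x + t1 *\<^sub>R c1) + norm (y + t2 *\<^sub>R c2)" by (rule norm_triangle_ineq)
      finally show ?thesis using 1 2 by (simp add: algebra_simps)
    qed
    have "p (x + y) - v \<le> p x" if "v \<in> S y" for v
      using Sp[of x "p (x + y) - v"] key that by force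
    then have "p (x + y) - p x \<le> p y" using Sp[of y "p (x + y) - p x"] by force
    then show ?thesis by simp
  qed
  have hom: "p (s *\<^sub>R x) \<le> s * p x" if s: "s > 0" for s x
  proof -
    have "p (s *\<^sub>R x) / s \<le> u" if u: "u \<in> S x" for u
    proof -
      obtain t c where tc: "u = norm (x + t *\<^sub>R c) - t * \<epsilon>" "t \<ge> 0" "c \<in> C"
        using u unfolding S_def by blast
      have "norm (s *\<^sub>R x + (s * t) *\<^sub>R c) - (s * t) * \<epsilon> \<in> S (s *\<^sub>R x)"
        unfolding S_def using tc s by force
      then have "p (s *\<^sub>R x) \<le> norm (s *\<^sub>R x + (s * t) *\<^sub>R c) - (s * t) * \<epsilon>" by (rule pS)
      also have "s *\<^sub>R x + (s * t) *\<^sub>R c = s *\<^sub>R (x + t *\<^sub>R c)" by (simp add: scaleR_add_right)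
      also have "norm (s *\<^sub>R (x + t *\<^sub>R c)) - (s * t) * \<epsilon> = s * u" unfolding norm_scaleR tc(1) using s by (simp add: algebra_simps)
      finally show ?thesis using s by (simp add: field_simps)
    qed
    then have "p (s *\<^sub>R x) / s \<le> p x" using Sp by blast
    then show ?thesis using s by (simp add: field_simps)
  qed
  obtain F where lin: "linear F" and Fp: "\<And>x. F x \<le> p x"
    using hahn_banach_sublinear[of p] sub hom by blast
  have bnd: "norm (F x) \<le> norm x * 1" for x
  proof -
    have "F x \<le> norm x" using Fp[of x] pnorm[of x] by linarith
    moreover have "- F x \<le> norm x" using Fp[of "-x"] pnorm[of "-x"] linear_neg[OF lin, of x] by simp
    ultimately show ?thesis by simp
  qed
  have "bounded_linear F" unfolding bounded_linear_def bounded_linear_axioms_def using lin bnd by blast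
  moreover have "F c > 0" if "c \<in> C" for c
  proof -
    have "F (-c) \<le> - \<epsilon>" using Fp[of "-c"] pc[OF that] by linarith
    then show ?thesis using linear_neg[OF lin, of c] ep by simp
  qed
  ultimately show ?thesis by blast
qed

lemma finite_codim_inter_ker:
  fixes Y :: "'a::real_vector set"
  assumes "finite_codim Y" "subspace Y" "linear f"
  shows "finite_codim (Y \<inter> {x. f x = (0::real)})"
proof (cases "\<exists>u\<in>Y. f u \<noteq> 0")
  case False
  then have "Y \<inter> {x. f x = 0} = Y" by auto
  then show ?thesis using assms(1) by simp
next
  case True
  then obtain u where u: "u \<in> Y" "f u \<noteq> 0" by blast
  define u' where "u' = (1 / f u) *\<^sub>R u"
  have u'Y: "u' \<in> Y" unfolding u'_def using u assms(2) by (simp add: subspace_scale)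
  have fu': "f u' = 1" unfolding u'_def using u linear_scale[OF assms(3)] by simp
  obtain F where F: "finite F" "span (Y \<union> F) = UNIV" using assms(1) unfolding finite_codim_def by blast
  let ?Z = "Y \<inter> {x. f x = 0}"
  have "span (?Z \<union> insert u' F) = UNIV"
  proof -
    have "x \<in> span (?Z \<union> insert u' F)" for x
    proof -
      have "x \<in> span (Y \<union> F)" using F by simp
      then obtain y s where ys: "x = y + s" "y \<in> span Y" "s \<in> span F" unfolding span_Un by blast
      have yY: "y \<in> Y" using ys(2) assms(2) by (metis span_eq_iff)
      have z: "y - f y *\<^sub>R u' \<in> ?Z"
        using yY u'Y assms(2) fu' linear_diff[OF assms(3)] linear_scale[OF assms(3)]
        by (simp add: subspace_diff subspace_scale)
      have "y - f y *\<^sub>R u' \<in> span (?Z \<union> insert u' F)" using z by (meson UnI1 span_base)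
      moreover have "f y *\<^sub>R u' \<in> span (?Z \<union> insert u' F)"
        by (meson UnI2 insertI1 span_base span_mul)
      moreover have "s \<in> span (?Z \<union> insert u' F)"
        using ys(3) by (meson span_mono subset_insertI sup.cobounded2 subset_trans subsetD)
      ultimately have "(y - f y *\<^sub>R u') + f y *\<^sub>R u' + s \<in> span (?Z \<union> insert u' F)"
        by (meson span_add)
      then show ?thesis using ys(1) by simp
    qed
    then show ?thesis by auto
  qed
  then show ?thesis unfolding finite_codim_def using F(1) by blast
qed

lemma finite_codim_kernels:
  fixes F :: "'b \<Rightarrow> 'a::real_vector \<Rightarrow> real"
  assumes "finite S" "\<And>q. q \<in> S \<Longrightarrow> linear (F q)"
  shows "finite_codim {x. \<forall>q\<in>S. F q x = 0} \<and> subspace {x. \<forall>q\<in>S. F q x = 0}"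
  using assms
proof (induction S rule: finite_induct)
  case empty
  have "span (UNIV \<union> {}) = (UNIV :: 'a set)" by (simp add: span_UNIV)
  then show ?case unfolding finite_codim_def by (auto simp: subspace_UNIV)
next
  case (insert a S)
  have eq: "{x. \<forall>q\<in>insert a S. F q x = 0} = {x. \<forall>q\<in>S. F q x = 0} \<inter> {x. F a x = 0}" by auto
  have IH: "finite_codim {x. \<forall>q\<in>S. F q x = 0}" "subspace {x. \<forall>q\<in>S. F q x = 0}"
    using insert by auto
  have la: "linear (F a)" using insert by auto
  have "subspace {x. F a x = 0}" using la
    by (simp add: subspace_def linear_add linear_scale linear_0)
  then show ?case unfolding eq using finite_codim_inter_ker[OF IH la] IH(2) subspace_inter by blast
qed

theorem theorem4p2:
  fixes A :: "'a::banach set" and Oset :: "'a set"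
  assumes "infinite_dimensional TYPE('a)"
    and "convex A" and "0 \<in> A"
    and "finite Oset"
    and "cball 0 1 \<subseteq> {a + c | a c. a \<in> A \<and> c \<in> Oset}"
    and "\<epsilon> > (0::real)"
  shows "\<exists>Y H. subspace Y \<and> closed Y \<and> finite_codim Y \<and> finite H \<and> H \<subseteq> A \<and>
           cball 0 1 \<inter> Y \<subseteq> {a - h + e | a h e. a \<in> A \<and> h \<in> H \<and> e \<in> (\<lambda>x. \<epsilon> *\<^sub>R x) ` cball 0 1}"
proof -
  note cvx = assms(2) and A0 = assms(3) and fin = assms(4) and cov = assms(5) and ep = assms(6)
  define good where "good = {q \<in> Oset. \<exists>w. w \<in> cball 0 \<epsilon> \<and> w - q \<in> A}"
  define bad where "bad = Oset - good"
  have sepo: "\<exists>G. bounded_linear G \<and> (\<forall>a\<in>A. (G (a + q) :: real) > 0)" if q: "q \<in> bad" for q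
  proof -
    have C: "convex ((\<lambda>a. a + q) ` A)" proof -
      have "(\<lambda>a. a + q) ` A = (+) q ` A" by (auto simp: add.commute)
      then show ?thesis using convex_translation[OF cvx, of q] by simp
    qed
    have ne: "(\<lambda>a. a + q) ` A \<noteq> {}" using A0 by blast
    have far: "\<epsilon> \<le> norm c" if cC: "c \<in> (\<lambda>a. a + q) ` A" for c
    proof (rule ccontr)
      assume "\<not> \<epsilon> \<le> norm c"
      then have "c \<in> cball 0 \<epsilon>" by simp
      moreover obtain a where "a \<in> A" "c = a + q" using cC by blast
      ultimately show False using q unfolding bad_def good_def by auto
    qed
    obtain G where G1: "bounded_linear G" and G2: "\<forall>c\<in>(\<lambda>a. a + q) ` A. (G c :: real) > 0"
      using convex_separation_ball[OF C ne ep far] by blast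
    have "\<forall>a\<in>A. G (a + q) > 0" using G2 by auto
    then show ?thesis using G1 by blast
  qed
  then obtain G where G: "\<And>q. q \<in> bad \<Longrightarrow> bounded_linear (G q)"
    "\<And>q a. q \<in> bad \<Longrightarrow> a \<in> A \<Longrightarrow> (G q (a + q) :: real) > 0"
    by metis
  define Y where "Y = {x. \<forall>q\<in>bad. G q x = 0}"
  have finbad: "finite bad" using fin unfolding bad_def by simp
  have YY: "finite_codim Y \<and> subspace Y" unfolding Y_def
    by (rule finite_codim_kernels[OF finbad]) (use G(1) bounded_linear.linear in blast)
  have Yclosed: "closed Y"
  proof -
    have "Y = (\<Inter>q\<in>bad. {x. G q x = 0})" unfolding Y_def by auto
    moreover have "closed {x. G q x = 0}" if "q \<in> bad" for q
      using G(1)[OF that] by (intro closed_Collect_eq) (auto intro: linear_continuous_on continuous_on_const)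
    ultimately show ?thesis by auto
  qed
  have "\<forall>q\<in>good. \<exists>w. w \<in> cball 0 \<epsilon> \<and> w - q \<in> A" unfolding good_def by blast
  then obtain W where W: "\<And>q. q \<in> good \<Longrightarrow> W q \<in> cball 0 \<epsilon> \<and> W q - q \<in> A" by metis
  define H where "H = (\<lambda>q. W q - q) ` good"
  have finH: "finite H" unfolding H_def good_def using fin by simp
  have HA: "H \<subseteq> A" unfolding H_def using W by blast
  have cover: "y \<in> {a - h + e | a h e. a \<in> A \<and> h \<in> H \<and> e \<in> (\<lambda>x. \<epsilon> *\<^sub>R x) ` cball 0 1}"
    if y: "y \<in> cball 0 1 \<inter> Y" for y
  proof -
    obtain a q where ao: "y = a + q" "a \<in> A" "q \<in> Oset" using y cov by blast
    have "q \<in> good"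
    proof (rule ccontr)
      assume "q \<notin> good"
      then have ob: "q \<in> bad" using ao(3) unfolding bad_def by blast
      have "G q y = 0" using y ob unfolding Y_def by blast
      moreover have "G q y > 0" using G(2)[OF ob ao(2)] ao(1) by simp
      ultimately show False by simp
    qed
    have e: "W q \<in> (\<lambda>x. \<epsilon> *\<^sub>R x) ` cball 0 1"
    proof
      show "W q = \<epsilon> *\<^sub>R ((1/\<epsilon>) *\<^sub>R W q)" using ep by simp
      show "(1/\<epsilon>) *\<^sub>R W q \<in> cball 0 1" using W[OF \<open>q \<in> good\<close>] ep by (simp add: field_simps)
    qed
    have "y = a - (W q - q) + W q" using ao(1) by simp
    moreover have "W q - q \<in> H" unfolding H_def using \<open>q \<in> good\<close> by blast
    ultimately show ?thesis using ao(2) e by blast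
  qed
  show ?thesis using YY Yclosed finH HA cover by blast
qed

end
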